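(* Let $d \ge 1$, let $r^{(1)},\dots,r^{(\rho)} \in (0,1)^d$ be pairwise incomparable points such that for each $j$ the values $r^{(i)}_j$ are distinct, let $S$ be their record-setting region and $G$ its set of generators. Let $r \in S \cap (0,1)^d$ be such that, for each $j \in [d]$, $r_j \ne r^{(i)}_j$ for all $i \in [\rho]$. Let $S' := S \setminus O^-_r = \{x \in S : x \not\prec r\}$. Define $\Sigma := \{g \in G : g \not\prec r\}$, $N := G \setminus \Sigma = \{g \in G: g \prec r\}$, $\widehat N := \{ y \vee (r_k e^{(k)}) : y \in N, k \in [d]\}$, and let $N'$ be the set of minimal elements of $\widehat N$ with respect to $\le$. Then $\Sigma \cap N' = \emptyset$ and the set of minimal elements of $S'$ with respect to $\le$ is exactly $\Sigma \cup N'$.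
   Context: For $x,y \in \mathbb{R}^d$, $x \prec y$ means $x_j < y_j$ for all $j$, and $x \le y$ means $x_j \le y_j$ for all $j$. The record-setting region of points $r^{(1)},\dots,r^{(\rho)}$ is $S := \{x \in [0,1)^d : x \not\prec r^{(i)} \text{ for all } i\}$; its generators are its minimal elements with respect to $\le$. $O^-_r := \{y \in [0,1)^d : y \prec r\}$. $x \vee y$ denotes the coordinatewise maximum, and $e^{(k)}$ is the $k$-th standard basis vector of $\mathbb{R}^d$. *)

theory Defs
  imports "HOL-Analysis.Analysis"
begin

text \<open>Points of the unit cube are vectors in real^'d (d = CARD('d) \<ge> 1).
  The order x \<le> y on real^'d is the library's componentwise order.\<close>

definition prec :: "real^'d \<Rightarrow> real^'d \<Rightarrow> bool" (infix "\<prec>" 50) where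
  "x \<prec> y \<longleftrightarrow> (\<forall>j. x$j < y$j)"

definition halfopen_cube :: "(real^'d) set" where
  "halfopen_cube = {x. \<forall>j. 0 \<le> x$j \<and> x$j < 1}"

definition open_cube :: "(real^'d) set" where
  "open_cube = {x. \<forall>j. 0 < x$j \<and> x$j < 1}"

definition record_region :: "(nat \<Rightarrow> real^'d) \<Rightarrow> nat \<Rightarrow> (real^'d) set" where
  "record_region R rho = {x \<in> halfopen_cube. \<forall>i\<in>{1..rho}. \<not> (x \<prec> R i)}"

definition minimal_elems :: "(real^'d) set \<Rightarrow> (real^'d) set" where
  "minimal_elems A = {x \<in> A. \<forall>y\<in>A. y \<le> x \<longrightarrow> y = x}"

definition generators :: "(nat \<Rightarrow> real^'d) \<Rightarrow> nat \<Rightarrow> (real^'d) set" where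
  "generators R rho = minimal_elems (record_region R rho)"

definition O_minus :: "real^'d \<Rightarrow> (real^'d) set" where
  "O_minus r = {y \<in> halfopen_cube. y \<prec> r}"

definition vjoin :: "real^'d \<Rightarrow> real^'d \<Rightarrow> real^'d" where
  "vjoin x y = (\<chi> j. max (x$j) (y$j))"

definition coord_vec :: "real^'d \<Rightarrow> 'd \<Rightarrow> real^'d" where
  "coord_vec r k = (\<chi> j. if j = k then r$k else 0)"

end

theory Submission
  imports Defs
begin

definition CC :: "(nat \<Rightarrow> real^'d) \<Rightarrow> nat \<Rightarrow> 'd \<Rightarrow> real set" where
  "CC R rho j = insert 0 ((\<lambda>i. R i $ j) ` {1..rho})"

definition rd :: "(nat \<Rightarrow> real^'d) \<Rightarrow> nat \<Rightarrow> real^'d \<Rightarrow> real^'d" where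
  "rd R rho x = (\<chi> j. Max {c \<in> CC R rho j. c \<le> x$j})"

lemma CC_finite: "finite (CC R rho j)"
  unfolding CC_def by simp

lemma rd_props:
  assumes x: "x \<in> record_region R rho"
  shows "rd R rho x \<in> record_region R rho" "rd R rho x \<le> x" "\<forall>j. rd R rho x $ j \<in> CC R rho j"
proof -
  have cube: "\<And>j. 0 \<le> x$j \<and> x$j < 1" using x by (simp add: record_region_def halfopen_cube_def)
  have fin: "\<And>j. finite {c \<in> CC R rho j. c \<le> x$j}" by (rule finite_subset[OF _ CC_finite]) auto
  have ne: "\<And>j. 0 \<in> {c \<in> CC R rho j. c \<le> x$j}" using cube by (simp add: CC_def)
  have mem: "\<And>j. rd R rho x $ j \<in> {c \<in> CC R rho j. c \<le> x$j}"
  proof -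
    fix j
    have "Max {c \<in> CC R rho j. c \<le> x$j} \<in> {c \<in> CC R rho j. c \<le> x$j}"
      using fin ne by (intro Max_in) auto
    thus "rd R rho x $ j \<in> {c \<in> CC R rho j. c \<le> x$j}" unfolding rd_def by simp
  qed
  have ge: "\<And>j c. c \<in> CC R rho j \<Longrightarrow> c \<le> x$j \<Longrightarrow> c \<le> rd R rho x $ j"
  proof -
    fix j c assume "c \<in> CC R rho j" "c \<le> x$j"
    hence "c \<le> Max {c \<in> CC R rho j. c \<le> x$j}" using fin by (intro Max_ge) auto
    thus "c \<le> rd R rho x $ j" unfolding rd_def by simp
  qed
  have le: "\<And>j. rd R rho x $ j \<le> x $ j" using mem by blast
  show "rd R rho x \<le> x" using le by (simp add: less_eq_vec_def)
  show "\<forall>j. rd R rho x $ j \<in> CC R rho j" using mem by blast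
  show "rd R rho x \<in> record_region R rho"
    unfolding record_region_def halfopen_cube_def
  proof safe
    fix j
    have "(0::real) \<in> CC R rho j" by (simp add: CC_def)
    thus "0 \<le> rd R rho x $ j" using ge[of 0 j] cube[of j] by blast
    show "rd R rho x $ j < 1" using le[of j] cube[of j] by linarith
  next
    fix i assume i: "i \<in> {1..rho}" and p: "rd R rho x \<prec> R i"
    have "\<not> x \<prec> R i" using x i by (simp add: record_region_def)
    then obtain j where j: "R i $ j \<le> x $ j" by (auto simp: prec_def not_less)
    have "R i $ j \<in> CC R rho j" using i by (simp add: CC_def)
    hence "R i $ j \<le> rd R rho x $ j" using ge j by blast
    moreover have "rd R rho x $ j < R i $ j" using p by (simp add: prec_def)
    ultimately show False by linarith
  qed
qed

lemma finite_grid: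
  fixes C :: "'d::finite \<Rightarrow> real set"
  assumes "\<And>j. finite (C j)"
  shows "finite {y::real^'d. \<forall>j. y$j \<in> C j}"
proof -
  have "{y::real^'d. \<forall>j. y$j \<in> C j} \<subseteq> (\<lambda>f. \<chi> j. f j) ` (PiE UNIV C)"
  proof
    fix y :: "real^'d" assume "y \<in> {y. \<forall>j. y$j \<in> C j}"
    hence "(\<lambda>j. y$j) \<in> PiE UNIV C" by auto
    thus "y \<in> (\<lambda>f. \<chi> j. f j) ` (PiE UNIV C)" by (intro image_eqI[where x="\<lambda>j. y$j"]) auto
  qed
  moreover have "finite (PiE UNIV C)" using assms by (simp add: finite_PiE)
  ultimately show ?thesis by (meson finite_imageI finite_subset)
qed

lemma exists_gen:
  fixes x :: "real^'d"
  assumes x: "x \<in> record_region R rho"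
  shows "\<exists>g \<in> generators R rho. g \<le> x \<and> (\<forall>j. g$j \<in> CC R rho j)"
proof -
  define F where "F = {y \<in> record_region R rho. y \<le> x \<and> (\<forall>j. y$j \<in> CC R rho j)}"
  have finF: "finite F"
    by (rule finite_subset[OF _ finite_grid[of "CC R rho"]]) (auto simp: F_def CC_finite)
  have "rd R rho x \<in> F" using rd_props[OF x] by (simp add: F_def)
  hence neF: "F \<noteq> {}" by auto
  define f where "f = (\<lambda>z::real^'d. \<Sum>j\<in>UNIV. z$j)"
  obtain y where y: "y \<in> F" and yf: "f y = Min (f ` F)"
  proof -
    have "Min (f ` F) \<in> f ` F" using finF neF by (intro Min_in) auto
    then obtain y where "y \<in> F" "Min (f ` F) = f y" by (rule imageE) blast
    thus ?thesis using that by simp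
  qed
  have ymin: "\<And>z. z \<in> F \<Longrightarrow> f y \<le> f z" using finF yf by simp
  have yS: "y \<in> record_region R rho" and yx: "y \<le> x" and yC: "\<forall>j. y$j \<in> CC R rho j"
    using y by (auto simp: F_def)
  have "y \<in> generators R rho"
    unfolding generators_def minimal_elems_def
  proof (safe intro!: yS)
    fix w assume w: "w \<in> record_region R rho" "w \<le> y"
    note rw = rd_props[OF w(1)]
    have "rd R rho w \<le> y" using rw(2) w(2) by (rule order_trans)
    hence "rd R rho w \<in> F" using rw yx by (auto simp: F_def intro: order_trans)
    hence le: "f y \<le> f (rd R rho w)" by (rule ymin)
    have "rd R rho w = y"
    proof (rule ccontr)
      assume "rd R rho w \<noteq> y"
      then obtain j where "rd R rho w $ j \<noteq> y $ j" by (auto simp: vec_eq_iff)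
      hence "rd R rho w $ j < y $ j" using \<open>rd R rho w \<le> y\<close> by (auto simp: less_eq_vec_def order_le_less)
      hence "f (rd R rho w) < f y" unfolding f_def
        using \<open>rd R rho w \<le> y\<close>
        by (intro sum_strict_mono_ex1) (auto simp: less_eq_vec_def)
      thus False using le by simp
    qed
    thus "w = y" using rw(2) w(2) by simp
  qed
  thus ?thesis using yx yC by blast
qed

lemma region_up:
  assumes "x \<in> record_region R rho" "y \<in> halfopen_cube" "x \<le> y"
  shows "y \<in> record_region R rho"
proof -
  have "\<not> y \<prec> R i" if i: "i \<in> {1..rho}" for i
  proof
    assume "y \<prec> R i"
    hence "x \<prec> R i" using assms(3) unfolding prec_def less_eq_vec_def by (meson le_less_trans)
    thus False using assms(1) i by (simp add: record_region_def)
  qed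
  thus ?thesis using assms(2) by (simp add: record_region_def)
qed

lemma vjoin_comp: "vjoin y (coord_vec r k) $ j = (if j = k then max (y$j) (r$k) else max (y$j) 0)"
  by (simp add: vjoin_def coord_vec_def)

lemma key:
  fixes g y r :: "real^'d"
  assumes gG: "g \<in> generators R rho" and gr: "\<not> g \<prec> r"
    and le: "g \<le> vjoin y (coord_vec r k)" and yr: "y \<prec> r" and ycube: "y \<in> halfopen_cube"
    and rcube: "r \<in> open_cube"
    and r_generic: "\<forall>j. \<forall>i\<in>{1..rho}. r $ j \<noteq> R i $ j"
  shows False
proof -
  obtain j where j: "r$j \<le> g$j" using gr by (auto simp: prec_def not_less)
  have gS: "g \<in> record_region R rho" using gG by (simp add: generators_def minimal_elems_def)
  obtain g' where g': "g' \<in> generators R rho" "g' \<le> g" "\<forall>j. g'$j \<in> CC R rho j"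
    using exists_gen[OF gS] by blast
  have "g' = g" using g' gG gS
    unfolding generators_def minimal_elems_def by auto
  hence gC: "\<forall>j. g$j \<in> CC R rho j" using g' by simp
  have yj: "0 \<le> y$j" "y$j < r$j" using ycube yr by (auto simp: halfopen_cube_def prec_def)
  have rpos: "0 < r$j" using rcube by (simp add: open_cube_def)
  have "g$j \<le> vjoin y (coord_vec r k) $ j" using le by (simp add: less_eq_vec_def)
  hence "j = k \<and> g$j = r$j" using j yj rpos by (auto simp: vjoin_comp split: if_splits)
  hence gj: "g$j = r$j" by blast
  have "g$j \<in> CC R rho j" using gC by simp
  then consider "g$j = 0" | i where "i \<in> {1..rho}" "g$j = R i $ j" unfolding CC_def by blast
  thus False
  proof cases
    case 1 thus False using gj rpos by simp
  next
    case (2 i) thus False using gj r_generic[rule_format, of i j] by simp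
  qed
qed

theorem mainTheorem6:
  fixes R :: "nat \<Rightarrow> real^'d" and rho :: nat and r :: "real^'d"
  assumes in_cube: "\<forall>i\<in>{1..rho}. R i \<in> open_cube"
    and incomparable: "\<forall>i\<in>{1..rho}. \<forall>i'\<in>{1..rho}. i \<noteq> i' \<longrightarrow> \<not> (R i \<le> R i')"
    and distinct_coords: "\<forall>j. \<forall>i\<in>{1..rho}. \<forall>i'\<in>{1..rho}. i \<noteq> i' \<longrightarrow> R i $ j \<noteq> R i' $ j"
    and r_in: "r \<in> record_region R rho \<inter> open_cube"
    and r_generic: "\<forall>j. \<forall>i\<in>{1..rho}. r $ j \<noteq> R i $ j"
  defines "S' \<equiv> record_region R rho - O_minus r"
    and "\<Sigma> \<equiv> {g \<in> generators R rho. \<not> (g \<prec> r)}"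
    and "N \<equiv> {g \<in> generators R rho. g \<prec> r}"
  defines "Nhat \<equiv> {vjoin y (coord_vec r k) | y k. y \<in> N}"
  defines "N' \<equiv> minimal_elems Nhat"
  shows "\<Sigma> \<inter> N' = {} \<and> minimal_elems S' = \<Sigma> \<union> N'"
proof -
  let ?S = "record_region R rho"
  have rcube: "r \<in> open_cube" using r_in by simp
  have GS: "\<And>g. g \<in> generators R rho \<Longrightarrow> g \<in> ?S"
    by (simp add: generators_def minimal_elems_def)
  have Gmin: "\<And>g w. g \<in> generators R rho \<Longrightarrow> w \<in> ?S \<Longrightarrow> w \<le> g \<Longrightarrow> w = g"
    by (simp add: generators_def minimal_elems_def)
  have Scube: "\<And>x. x \<in> ?S \<Longrightarrow> x \<in> halfopen_cube" by (simp add: record_region_def)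
  have S'_iff: "\<And>x. x \<in> S' \<longleftrightarrow> x \<in> ?S \<and> \<not> x \<prec> r"
    using Scube by (auto simp: S'_def O_minus_def)
  have Nhat_S': "\<And>y k. y \<in> N \<Longrightarrow> vjoin y (coord_vec r k) \<in> S'"
  proof -
    fix y k assume y: "y \<in> N"
    hence yS: "y \<in> ?S" and yr: "y \<prec> r" using GS by (auto simp: N_def)
    have yc: "y \<in> halfopen_cube" using Scube yS by blast
    have zc: "vjoin y (coord_vec r k) \<in> halfopen_cube"
      using yc rcube by (auto simp: halfopen_cube_def open_cube_def vjoin_comp max_def intro: less_imp_le)
    have "y \<le> vjoin y (coord_vec r k)" by (simp add: less_eq_vec_def vjoin_comp)
    hence "vjoin y (coord_vec r k) \<in> ?S" using region_up[OF yS zc] by simp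
    moreover have "\<not> vjoin y (coord_vec r k) \<prec> r"
      by (auto simp: prec_def vjoin_comp intro!: exI[of _ k])
    ultimately show "vjoin y (coord_vec r k) \<in> S'" using S'_iff by blast
  qed
  have NhatS': "Nhat \<subseteq> S'" using Nhat_S' by (auto simp: Nhat_def)
  have Ncube: "\<And>y. y \<in> N \<Longrightarrow> y \<in> halfopen_cube \<and> y \<prec> r"
    using GS Scube by (auto simp: N_def)
  have disj: "\<Sigma> \<inter> N' = {}"
  proof (rule ccontr)
    assume "\<Sigma> \<inter> N' \<noteq> {}"
    then obtain g where gS: "g \<in> \<Sigma>" and gN: "g \<in> Nhat" by (auto simp: N'_def minimal_elems_def)
    then obtain y k where "y \<in> N" "g = vjoin y (coord_vec r k)" by (auto simp: Nhat_def)
    thus False using key[of g R rho r y k] gS Ncube rcube r_generic by (auto simp: \<Sigma>_def)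
  qed
  have SigS': "\<Sigma> \<subseteq> S'" using S'_iff GS by (auto simp: \<Sigma>_def)
  have below: "\<And>x. x \<in> S' \<Longrightarrow> (\<exists>g\<in>\<Sigma>. g \<le> x) \<or> (\<exists>z\<in>Nhat. z \<le> x)"
  proof -
    fix x assume x: "x \<in> S'"
    hence xS: "x \<in> ?S" and xr: "\<not> x \<prec> r" using S'_iff by auto
    obtain g where g: "g \<in> generators R rho" "g \<le> x" using exists_gen[OF xS] by blast
    show "(\<exists>g\<in>\<Sigma>. g \<le> x) \<or> (\<exists>z\<in>Nhat. z \<le> x)"
    proof (cases "g \<prec> r")
      case False
      thus ?thesis using g by (auto simp: \<Sigma>_def)
    next
      case True
      hence gN: "g \<in> N" using g by (simp add: N_def)
      obtain k where k: "r$k \<le> x$k" using xr by (auto simp: prec_def not_less)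
      have xc: "x \<in> halfopen_cube" using Scube xS by blast
      have "vjoin g (coord_vec r k) \<le> x"
        using g(2) k xc by (auto simp: less_eq_vec_def vjoin_comp halfopen_cube_def)
      moreover have "vjoin g (coord_vec r k) \<in> Nhat" using gN by (auto simp: Nhat_def)
      ultimately show ?thesis by blast
    qed
  qed
  have sub1: "minimal_elems S' \<subseteq> \<Sigma> \<union> N'"
  proof
    fix x assume xm: "x \<in> minimal_elems S'"
    hence x: "x \<in> S'" and xmin: "\<And>w. w \<in> S' \<Longrightarrow> w \<le> x \<Longrightarrow> w = x"
      by (auto simp: minimal_elems_def)
    from below[OF x] show "x \<in> \<Sigma> \<union> N'"
    proof
      assume "\<exists>g\<in>\<Sigma>. g \<le> x"
      then obtain g where "g \<in> \<Sigma>" "g \<le> x" by blast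
      thus ?thesis using xmin SigS' by auto
    next
      assume "\<exists>z\<in>Nhat. z \<le> x"
      then obtain z where z: "z \<in> Nhat" "z \<le> x" by blast
      hence "z = x" using xmin NhatS' by auto
      hence "x \<in> N'" using z xmin NhatS' by (auto simp: N'_def minimal_elems_def)
      thus ?thesis by simp
    qed
  qed
  have sub2: "\<Sigma> \<subseteq> minimal_elems S'"
  proof
    fix g assume g: "g \<in> \<Sigma>"
    hence gG: "g \<in> generators R rho" by (simp add: \<Sigma>_def)
    show "g \<in> minimal_elems S'"
      unfolding minimal_elems_def using g SigS' Gmin[OF gG] S'_iff by auto
  qed
  have sub3: "N' \<subseteq> minimal_elems S'"
  proof
    fix z assume z: "z \<in> N'"
    hence zN: "z \<in> Nhat" and zmin: "\<And>w. w \<in> Nhat \<Longrightarrow> w \<le> z \<Longrightarrow> w = z"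
      by (auto simp: N'_def minimal_elems_def)
    obtain y k where y: "y \<in> N" and zy: "z = vjoin y (coord_vec r k)" using zN by (auto simp: Nhat_def)
    have "\<And>w. w \<in> S' \<Longrightarrow> w \<le> z \<Longrightarrow> w = z"
    proof -
      fix w assume w: "w \<in> S'" "w \<le> z"
      from below[OF w(1)] show "w = z"
      proof
        assume "\<exists>g\<in>\<Sigma>. g \<le> w"
        then obtain g where g: "g \<in> \<Sigma>" "g \<le> w" by blast
        have "g \<le> z" using g(2) w(2) by (rule order_trans)
        thus ?thesis using key[of g R rho r y k] g Ncube[OF y] rcube r_generic zy
          by (auto simp: \<Sigma>_def)
      next
        assume "\<exists>z'\<in>Nhat. z' \<le> w"
        then obtain z' where z': "z' \<in> Nhat" "z' \<le> w" by blast
        have "z' \<le> z" using z'(2) w(2) by (rule order_trans)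
        hence "z' = z" using zmin z'(1) by blast
        thus ?thesis using z'(2) w(2) by simp
      qed
    qed
    thus "z \<in> minimal_elems S'" using zN NhatS' by (auto simp: minimal_elems_def)
  qed
  show ?thesis using disj subset_antisym[OF sub1 Un_least[OF sub2 sub3]] by (rule conjI)
qed

end
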